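(* Let $z=r\mathrm{e}^{i\theta}$ with $r>0$, $|\theta|<\pi/4$, let $H$ be the operator $(Hf)(x)=-f''(x)+z^4x^2f(x)$ in $L^2(\mathbf{R})$, and let $P_n$ be its $n$th spectral projection. Then \[ \liminf_{n\to\infty}n^{-1}\log\|P_n\|\ge\log(\sec 2\theta). \]
   Context: $H$ has eigenvalues $\lambda_n=z^2(2n+1)$ and eigenfunctions $\phi_n(x)=k_n\mathrm{e}^{-z^2x^2/2}H_n(zx)$ ($H_n$ the Hermite polynomials), with constants $k_n$ chosen so that $\int_{\mathbf{R}}\phi_n(x)^2\,\mathrm{d}x=1$ (no complex conjugate). The spectral projection is $P_nf=\big(\int_{\mathbf{R}}f\phi_n\,\mathrm{d}x\big)\phi_n$, so that $\|P_n\|=\int_{\mathbf{R}}|\phi_n|^2\,\mathrm{d}x$. *)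

theory Defs
  imports "HOL-Analysis.Analysis"
begin

fun hermite :: "nat \<Rightarrow> complex \<Rightarrow> complex" where
  "hermite 0 w = 1"
| "hermite (Suc 0) w = 2 * w"
| "hermite (Suc (Suc n)) w = 2 * w * hermite (Suc n) w - 2 * of_nat (Suc n) * hermite n w"

text \<open>Eigenfunction phi_n(x) = k_n exp(-z^2 x^2/2) H_n(z x) of (Hf)(x) = -f''(x) + z^4 x^2 f(x).\<close>
definition eigfun :: "complex \<Rightarrow> (nat \<Rightarrow> complex) \<Rightarrow> nat \<Rightarrow> real \<Rightarrow> complex" where
  "eigfun z k n x = k n * exp (- (z\<^sup>2 * (of_real x)\<^sup>2) / 2) * hermite n (z * of_real x)"

text \<open>Norm of the spectral projection P_n f = (\<integral> f phi_n) phi_n, namely \<integral> |phi_n|^2.\<close>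
definition proj_norm :: "complex \<Rightarrow> (nat \<Rightarrow> complex) \<Rightarrow> nat \<Rightarrow> real" where
  "proj_norm z k n = (LINT x|lborel. (cmod (eigfun z k n x))\<^sup>2)"

end

theory Submission
  imports Defs "HOL-Probability.Probability" "HOL-Real_Asymp.Real_Asymp"
begin


lemma hermite_rec: "hermite (Suc n) w = 2 * w * hermite n w - 2 * of_nat n * hermite (n - 1) w"
  by (cases n) auto

lemma hermite_deriv: "(hermite n has_field_derivative (of_nat (2 * n) * hermite (n - 1) w)) (at w)"
proof (induction n w rule: hermite.induct)
  case (1 w) then show ?case by (auto intro!: derivative_eq_intros)
next
  case (2 w) then show ?case by (auto intro!: derivative_eq_intros)
next
  case (3 n w)
  have e: "hermite (Suc (Suc n)) = (\<lambda>w. 2 * w * hermite (Suc n) w - 2 * of_nat (Suc n) * hermite n w)"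
    by (rule ext) simp
  have D0: "((\<lambda>w. 2 * w * hermite (Suc n) w - 2 * of_nat (Suc n) * hermite n w) has_field_derivative
     (2 * hermite (Suc n) w + 2 * w * (of_nat (2 * Suc n) * hermite n w)
       - 2 * of_nat (Suc n) * (of_nat (2 * n) * hermite (n - 1) w))) (at w)"
    by (auto intro!: derivative_eq_intros 3)
  moreover have eq: "2 * hermite (Suc n) w + 2 * w * (of_nat (2 * Suc n) * hermite n w)
       - 2 * of_nat (Suc n) * (of_nat (2 * n) * hermite (n - 1) w) = of_nat (2 * Suc (Suc n)) * hermite (Suc (Suc n) - 1) w"
    by (simp add: hermite_rec[of n] algebra_simps)
  ultimately show ?case unfolding e by (rule DERIV_cong)
qed

lemma hermite_cont[continuous_intros]: "isCont (hermite n) w"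
  using hermite_deriv DERIV_isCont by blast

lemma hermite_real0: "Im w = 0 \<Longrightarrow> Im (hermite n w) = 0"
  by (induction n w rule: hermite.induct) auto

lemma hermite_real: "Im (hermite n (of_real y)) = 0"
  by (simp add: hermite_real0)

lemma hermite_bound: "\<exists>C. \<forall>w. cmod (hermite n w) \<le> C * exp (real n * cmod w)"
proof (induction n rule: less_induct)
  case (less n)
  consider "n = 0" | "n = Suc 0" | m where "n = Suc (Suc m)" by (metis not0_implies_Suc)
  then show ?case
  proof cases
    case 1 then show ?thesis by auto
  next
    case 2
  have "cmod (hermite (Suc 0) w) \<le> 2 * exp (real (Suc 0) * cmod w)" for w
  proof -
    have "cmod w \<le> exp (cmod w)" using exp_ge_add_one_self[of "cmod w"] by linarith
    then show ?thesis by (simp add: norm_mult)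
  qed
  then show ?thesis using 2 by blast
next
  case (3 n')
  have lt: "n' < n" "Suc n' < n" using 3 by auto
  obtain C0 where C0: "\<And>w. cmod (hermite n' w) \<le> C0 * exp (real n' * cmod w)" using less(1)[OF lt(1)] by blast
  obtain C1 where C1: "\<And>w. cmod (hermite (Suc n') w) \<le> C1 * exp (real (Suc n') * cmod w)" using less(1)[OF lt(2)] by blast
  have "cmod (hermite (Suc (Suc n')) w) \<le> (2 * C1 + 2 * real (Suc n') * C0) * exp (real (Suc (Suc n')) * cmod w)" for w
  proof -
    have w: "cmod w \<le> exp (cmod w)" using exp_ge_add_one_self[of "cmod w"] by linarith
    have C0p: "0 \<le> C0" using C0[of 0] by simp (meson norm_ge_zero order_trans)
    have C1p: "0 \<le> C1" using C1[of 0] by simp (meson norm_ge_zero order_trans)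
    have "cmod (hermite (Suc (Suc n')) w) = cmod (2 * w * hermite (Suc n') w - 2 * of_nat (Suc n') * hermite n' w)"
      by (simp only: hermite.simps)
    also have "\<dots> \<le> cmod (2 * w * hermite (Suc n') w) + cmod (2 * of_nat (Suc n') * hermite n' w)"
      by (rule norm_triangle_ineq4)
    also have "\<dots> = 2 * cmod w * cmod (hermite (Suc n') w) + 2 * real (Suc n') * cmod (hermite n' w)"
      by (simp only: norm_mult norm_of_nat norm_numeral)
    also have "\<dots> \<le> 2 * exp (cmod w) * (C1 * exp (real (Suc n') * cmod w)) + 2 * real (Suc n') * (C0 * exp (real n' * cmod w))"
      by (intro add_mono mult_mono C0 C1 w) auto
    also have "\<dots> \<le> 2 * C1 * exp (real (Suc (Suc n')) * cmod w) + 2 * real (Suc n') * (C0 * exp (real (Suc (Suc n')) * cmod w))"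
    proof (intro add_mono mult_left_mono)
      show "2 * exp (cmod w) * (C1 * exp (real (Suc n') * cmod w)) \<le> 2 * C1 * exp (real (Suc (Suc n')) * cmod w)"
      proof -
        have eqx: "exp (cmod w) * exp (real (Suc n') * cmod w) = exp (real (Suc (Suc n')) * cmod w)"
          by (simp add: exp_add[symmetric] algebra_simps)
        show ?thesis unfolding eqx[symmetric] by (simp add: mult_ac)
      qed
      show "exp (real n' * cmod w) \<le> exp (real (Suc (Suc n')) * cmod w)"
        by (simp add: mult_right_mono)
    qed (use C0p in auto)
    finally show ?thesis by (simp add: algebra_simps)
  qed
  then show ?thesis using 3 by blast
  qed
qed



lemma gauss_integrable: fixes c :: real assumes "c > 0"
  shows "integrable lborel (\<lambda>x. exp (- c * x\<^sup>2))"
proof -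
  define \<sigma> where "\<sigma> = sqrt (1 / (2 * c))"
  have s2: "\<sigma>\<^sup>2 = 1 / (2 * c)" using assms by (simp add: \<sigma>_def)
  define K where "K = 1 / sqrt (2 * pi * \<sigma>\<^sup>2)"
  have sp: "\<sigma> > 0" using assms by (simp add: \<sigma>_def)
  have Kp: "K > 0" using assms by (simp add: K_def s2)
  have "normal_density 0 \<sigma> x / K = exp (- c * x\<^sup>2)" for x
    using Kp sp assms unfolding normal_density_def K_def[symmetric] by (simp add: s2 field_simps)
  moreover have "integrable lborel (\<lambda>x. (1 / K) * normal_density 0 \<sigma> x)"
    using sp by (intro integrable_mult_right integrable_normal_density) auto
  ultimately show ?thesis by simp
qed

lemma expbound_aux: fixes a b x :: real assumes "a > 0"
  shows "exp (- a * x\<^sup>2 + b * \<bar>x\<bar>) \<le> exp (b\<^sup>2 / (2 * a)) * exp (- (a / 2) * x\<^sup>2)"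
proof -
  have "b\<^sup>2 / (2 * a) + (- (a / 2) * x\<^sup>2) - (- a * x\<^sup>2 + b * \<bar>x\<bar>) = (a * \<bar>x\<bar> - b)\<^sup>2 / (2 * a)"
    using assms by (simp add: field_simps power2_eq_square)
  moreover have "(a * \<bar>x\<bar> - b)\<^sup>2 / (2 * a) \<ge> 0" using assms by simp
  ultimately have "- a * x\<^sup>2 + b * \<bar>x\<bar> \<le> b\<^sup>2 / (2 * a) + (- (a / 2) * x\<^sup>2)" by linarith
  then show ?thesis by (simp add: exp_add[symmetric])
qed

lemma expbound_integrable:
  fixes f :: "real \<Rightarrow> complex" and a b C :: real
  assumes "a > 0" "continuous_on UNIV f" "\<And>x. cmod (f x) \<le> C * exp (- a * x\<^sup>2 + b * \<bar>x\<bar>)"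
  shows "integrable lborel f"
proof (rule Bochner_Integration.integrable_bound)
  show "integrable lborel (\<lambda>x. (C * exp (b\<^sup>2 / (2 * a))) * exp (- (a / 2) * x\<^sup>2))"
    using gauss_integrable[of "a/2"] assms(1) by simp
  show "f \<in> borel_measurable lborel" using assms(2) by (simp add: borel_measurable_continuous_onI)
  show "AE x in lborel. norm (f x) \<le> norm (C * exp (b\<^sup>2 / (2 * a)) * exp (- (a / 2) * x\<^sup>2))"
  proof (rule AE_I2)
    fix x
    have C: "C \<ge> 0" using assms(3)[of x] by (smt (verit) exp_gt_zero norm_ge_zero zero_le_mult_iff)
    have "cmod (f x) \<le> C * (exp (b\<^sup>2 / (2 * a)) * exp (- (a / 2) * x\<^sup>2))"
      using assms(3)[of x] expbound_aux[where x=x and b=b, OF assms(1)] C by (meson mult_left_mono order_trans)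
    then show "norm (f x) \<le> norm (C * exp (b\<^sup>2 / (2 * a)) * exp (- (a / 2) * x\<^sup>2))"
      using C by (simp add: abs_mult mult.assoc)
  qed
qed

lemma expbound_lim:
  fixes f :: "real \<Rightarrow> complex" and a b C :: real
  assumes "a > 0" "\<And>x. cmod (f x) \<le> C * exp (- a * x\<^sup>2 + b * \<bar>x\<bar>)"
  shows "(f \<longlongrightarrow> 0) at_top" "(f \<longlongrightarrow> 0) at_bot"
proof -
  have C: "C \<ge> 0" using assms(2)[of 0] by simp (meson norm_ge_zero order_trans)
  have bnd: "norm (f x) \<le> C * exp (b\<^sup>2 / (2 * a)) * exp (- (a / 2) * x\<^sup>2)" for x
  proof -
    have "cmod (f x) \<le> C * (exp (b\<^sup>2 / (2 * a)) * exp (- (a / 2) * x\<^sup>2))"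
      using assms(2)[of x] expbound_aux[where x=x and b=b, OF assms(1)] C by (meson mult_left_mono order_trans)
    then show ?thesis by (simp add: mult.assoc)
  qed
  have g1: "((\<lambda>x. exp (- (a / 2) * x\<^sup>2)) \<longlongrightarrow> 0) at_top"
    using assms(1) by real_asymp
  have g2: "((\<lambda>x. exp (- (a / 2) * x\<^sup>2)) \<longlongrightarrow> 0) at_bot"
    using assms(1) by real_asymp
  have l1: "((\<lambda>x. C * exp (b\<^sup>2 / (2 * a)) * exp (- (a / 2) * x\<^sup>2)) \<longlongrightarrow> 0) at_top"
    using tendsto_mult_right_zero[OF g1] by simp
  have l2: "((\<lambda>x. C * exp (b\<^sup>2 / (2 * a)) * exp (- (a / 2) * x\<^sup>2)) \<longlongrightarrow> 0) at_bot"
    using tendsto_mult_right_zero[OF g2] by simp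
  show "(f \<longlongrightarrow> 0) at_top" by (rule Lim_null_comparison[OF always_eventually l1]) (use bnd in blast)
  show "(f \<longlongrightarrow> 0) at_bot" by (rule Lim_null_comparison[OF always_eventually l2]) (use bnd in blast)
qed

lemma integral_deriv_zero:
  fixes F f :: "real \<Rightarrow> complex"
  assumes "\<And>x. (F has_vector_derivative f x) (at x)" "continuous_on UNIV f" "integrable lborel f"
    "(F \<longlongrightarrow> 0) at_top" "(F \<longlongrightarrow> 0) at_bot"
  shows "(LINT x|lborel. f x) = 0"
proof -
  have "(LBINT x=-\<infinity>..\<infinity>. f x) = 0 - 0"
  proof (rule interval_integral_FTC_integrable[where F=F])
    show "isCont f x" for x using assms(2) by (simp add: continuous_on_eq_continuous_at)
    show "set_integrable lborel (einterval (- \<infinity>) \<infinity>) f"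
      using assms(3) by (simp add: set_integrable_def)
    show "((F \<circ> real_of_ereal) \<longlongrightarrow> 0) (at_right (- \<infinity>))" using assms(5) by (simp add: ereal_tendsto_simps1)
    show "((F \<circ> real_of_ereal) \<longlongrightarrow> 0) (at_left \<infinity>)" using assms(4) by (simp add: ereal_tendsto_simps1)
  qed (use assms(1) in auto)
  then show ?thesis
    by (simp add: interval_lebesgue_integral_def set_lebesgue_integral_def)
qed



definition W :: "complex \<Rightarrow> real \<Rightarrow> complex" where
  "W t x = exp (- (t\<^sup>2 * of_real (x\<^sup>2)))"

lemma W_norm: "cmod (W t x) = exp (- Re (t\<^sup>2) * x\<^sup>2)"
  unfolding W_def by (simp add: norm_exp_eq_Re)

lemma W_deriv: "(W t has_vector_derivative (- (t\<^sup>2 * of_real (2 * x)) * W t x)) (at x)"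
proof -
  have d1: "((\<lambda>x. - (t\<^sup>2 * of_real (x\<^sup>2))) has_vector_derivative (- (t\<^sup>2 * of_real (2 * x)))) (at x)"
  proof -
    have "((\<lambda>x. of_real (x\<^sup>2) :: complex) has_vector_derivative of_real (2 * x)) (at x)"
      by (rule has_vector_derivative_of_real) (auto intro!: derivative_eq_intros)
    from has_vector_derivative_minus[OF has_vector_derivative_mult_right[OF this, of "t\<^sup>2"]]
    show ?thesis .
  qed
  have "((exp \<circ> (\<lambda>x. - (t\<^sup>2 * of_real (x\<^sup>2)))) has_vector_derivative (- (t\<^sup>2 * of_real (2 * x)) * exp (- (t\<^sup>2 * of_real (x\<^sup>2))))) (at x)"
    by (rule field_vector_diff_chain_at[OF d1 DERIV_exp])
  then show ?thesis unfolding W_def o_def by simp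
qed

lemma H_deriv: "((\<lambda>x. hermite k (c * of_real x)) has_vector_derivative (c * (of_nat (2 * k) * hermite (k - 1) (c * of_real x)))) (at x)"
proof -
  have d1: "((\<lambda>x. c * of_real x) has_vector_derivative c) (at x)"
    using has_vector_derivative_mult_right[OF has_vector_derivative_of_real[OF DERIV_ident], of c] by simp
  show ?thesis using field_vector_diff_chain_at[OF d1 hermite_deriv] by (simp add: o_def)
qed

lemma hermite_cont_on[continuous_intros]: "continuous_on S g \<Longrightarrow> continuous_on S (\<lambda>x. hermite n (g x))"
  by (rule continuous_on_compose2[of UNIV "hermite n"]) (auto intro: continuous_at_imp_continuous_on hermite_cont)

lemma W_cont[continuous_intros]: "continuous_on S (W t)"
  unfolding W_def by (intro continuous_intros)

lemma good:
  assumes "Re (t\<^sup>2) > 0"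
  shows "integrable lborel (\<lambda>x. W t x * of_real x ^ j * hermite p (u * of_real x) * hermite q (v * of_real x))"
    "((\<lambda>x. W t x * of_real x ^ j * hermite p (u * of_real x) * hermite q (v * of_real x)) \<longlongrightarrow> 0) at_top"
    "((\<lambda>x. W t x * of_real x ^ j * hermite p (u * of_real x) * hermite q (v * of_real x)) \<longlongrightarrow> 0) at_bot"
proof -
  obtain C1 where C1: "\<And>w. cmod (hermite p w) \<le> C1 * exp (real p * cmod w)" using hermite_bound by blast
  obtain C2 where C2: "\<And>w. cmod (hermite q w) \<le> C2 * exp (real q * cmod w)" using hermite_bound by blast
  have C1p: "0 \<le> C1" using C1[of 0] by simp (meson norm_ge_zero order_trans)
  have C2p: "0 \<le> C2" using C2[of 0] by simp (meson norm_ge_zero order_trans)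
  define b where "b = real j + real p * cmod u + real q * cmod v"
  have bnd: "cmod (W t x * of_real x ^ j * hermite p (u * of_real x) * hermite q (v * of_real x))
     \<le> (C1 * C2) * exp (- Re (t\<^sup>2) * x\<^sup>2 + b * \<bar>x\<bar>)" for x
  proof -
    have xj: "\<bar>x\<bar> ^ j \<le> exp (real j * \<bar>x\<bar>)"
    proof -
      have "\<bar>x\<bar> \<le> exp \<bar>x\<bar>" using exp_ge_add_one_self[of "\<bar>x\<bar>"] by linarith
      then have "\<bar>x\<bar> ^ j \<le> exp \<bar>x\<bar> ^ j" by (intro power_mono) auto
      then show ?thesis by (simp add: exp_of_nat_mult)
    qed
    have h1: "cmod (hermite p (u * of_real x)) \<le> C1 * exp (real p * cmod u * \<bar>x\<bar>)"
      using C1[of "u * of_real x"] by (simp add: norm_mult mult.assoc)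
    have h2: "cmod (hermite q (v * of_real x)) \<le> C2 * exp (real q * cmod v * \<bar>x\<bar>)"
      using C2[of "v * of_real x"] by (simp add: norm_mult mult.assoc)
    have "cmod (W t x * of_real x ^ j * hermite p (u * of_real x) * hermite q (v * of_real x))
        = exp (- Re (t\<^sup>2) * x\<^sup>2) * \<bar>x\<bar> ^ j * cmod (hermite p (u * of_real x)) * cmod (hermite q (v * of_real x))"
      by (simp add: norm_mult W_norm norm_power)
    also have "\<dots> \<le> exp (- Re (t\<^sup>2) * x\<^sup>2) * exp (real j * \<bar>x\<bar>) * (C1 * exp (real p * cmod u * \<bar>x\<bar>)) * (C2 * exp (real q * cmod v * \<bar>x\<bar>))"
      by (intro mult_mono xj h1 h2 mult_nonneg_nonneg C1p C2p) auto
    also have "\<dots> = (C1 * C2) * exp (- Re (t\<^sup>2) * x\<^sup>2 + b * \<bar>x\<bar>)"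
      unfolding b_def by (simp add: exp_add[symmetric] algebra_simps)
    finally show ?thesis .
  qed
  have cont: "continuous_on UNIV (\<lambda>x. W t x * of_real x ^ j * hermite p (u * of_real x) * hermite q (v * of_real x))"
    by (intro continuous_intros)
  show "integrable lborel (\<lambda>x. W t x * of_real x ^ j * hermite p (u * of_real x) * hermite q (v * of_real x))"
    by (rule expbound_integrable[OF assms cont bnd])
  show "((\<lambda>x. W t x * of_real x ^ j * hermite p (u * of_real x) * hermite q (v * of_real x)) \<longlongrightarrow> 0) at_top"
    by (rule expbound_lim(1)[OF assms bnd])
  show "((\<lambda>x. W t x * of_real x ^ j * hermite p (u * of_real x) * hermite q (v * of_real x)) \<longlongrightarrow> 0) at_bot"
    by (rule expbound_lim(2)[OF assms bnd])
qed



lemma Brec: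
  assumes a: "Re (t\<^sup>2) > 0"
  shows "(LINT x|lborel. W t x * hermite (Suc n) (z * of_real x) * hermite (Suc m) (t * of_real x))
   = 2 * of_nat (Suc n) * z / t * (LINT x|lborel. W t x * hermite n (z * of_real x) * hermite m (t * of_real x))"
proof -
  have t0: "t \<noteq> 0" using a by auto
  define f1 where "f1 x = W t x * of_real x * hermite (Suc n) (z * of_real x) * hermite m (t * of_real x)" for x
  define f2 where "f2 x = W t x * hermite (Suc n) (z * of_real x) * hermite (m - 1) (t * of_real x)" for x
  define f3 where "f3 x = W t x * hermite n (z * of_real x) * hermite m (t * of_real x)" for x
  define F where "F x = W t x * hermite (Suc n) (z * of_real x) * hermite m (t * of_real x)" for x
  define F' where "F' x = (- 2 * t\<^sup>2) * f1 x + (2 * of_nat (Suc n) * z) * f3 x + (2 * of_nat m * t) * f2 x" for x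
  have i1: "integrable lborel f1"
    using good(1)[OF a, where j=1 and p="Suc n" and u=z and q=m and v=t] unfolding f1_def by simp
  have i2: "integrable lborel f2"
    using good(1)[OF a, where j=0 and p="Suc n" and u=z and q="m - 1" and v=t] unfolding f2_def by simp
  have i3: "integrable lborel f3"
    using good(1)[OF a, where j=0 and p=n and u=z and q=m and v=t] unfolding f3_def by simp
  have FT: "(F \<longlongrightarrow> 0) at_top" "(F \<longlongrightarrow> 0) at_bot"
    using good(2,3)[OF a, where j=0 and p="Suc n" and u=z and q=m and v=t] unfolding F_def by simp_all
  have iF': "integrable lborel F'"
    unfolding F'_def using i1 i2 i3 by simp
  have cF': "continuous_on UNIV F'"
    unfolding F'_def f1_def f2_def f3_def by (intro continuous_intros)
  have dF: "(F has_vector_derivative F' x) (at x)" for x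
  proof -
    have "(F has_vector_derivative
        ((W t x * hermite (Suc n) (z * of_real x)) * (t * (of_nat (2 * m) * hermite (m - 1) (t * of_real x)))
         + (W t x * (z * (of_nat (2 * Suc n) * hermite (Suc n - 1) (z * of_real x)))
            + (- (t\<^sup>2 * of_real (2 * x)) * W t x) * hermite (Suc n) (z * of_real x)) * hermite m (t * of_real x))) (at x)"
      unfolding F_def by (intro has_vector_derivative_mult W_deriv H_deriv)
    moreover have "((W t x * hermite (Suc n) (z * of_real x)) * (t * (of_nat (2 * m) * hermite (m - 1) (t * of_real x)))
         + (W t x * (z * (of_nat (2 * Suc n) * hermite (Suc n - 1) (z * of_real x)))
            + (- (t\<^sup>2 * of_real (2 * x)) * W t x) * hermite (Suc n) (z * of_real x)) * hermite m (t * of_real x)) = F' x"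
      unfolding F'_def f1_def f2_def f3_def by (simp add: algebra_simps)
    ultimately show ?thesis by simp
  qed
  have "(LINT x|lborel. F' x) = 0"
    by (rule integral_deriv_zero[OF dF cF' iF' FT])
  moreover have "(LINT x|lborel. F' x) = (- 2 * t\<^sup>2) * (LINT x|lborel. f1 x) + (2 * of_nat (Suc n) * z) * (LINT x|lborel. f3 x)
      + (2 * of_nat m * t) * (LINT x|lborel. f2 x)"
    unfolding F'_def
    using i1 i2 i3 by simp
  ultimately have E1: "(- 2 * t\<^sup>2) * (LINT x|lborel. f1 x) + (2 * of_nat (Suc n) * z) * (LINT x|lborel. f3 x)
      + (2 * of_nat m * t) * (LINT x|lborel. f2 x) = 0" by simp
  have "(LINT x|lborel. W t x * hermite (Suc n) (z * of_real x) * hermite (Suc m) (t * of_real x))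
      = (LINT x|lborel. (2 * t) * f1 x - (2 * of_nat m) * f2 x)"
    by (rule Bochner_Integration.integral_cong) (simp_all add: hermite_rec[of m] f1_def f2_def algebra_simps)
  also have "\<dots> = (2 * t) * (LINT x|lborel. f1 x) - (2 * of_nat m) * (LINT x|lborel. f2 x)"
    using i1 i2 by simp
  also have "\<dots> = 2 * of_nat (Suc n) * z / t * (LINT x|lborel. f3 x)"
    using E1 t0 by (simp add: field_simps power2_eq_square)
  finally show ?thesis unfolding f3_def .
qed

lemma Bn:
  assumes a: "Re (t\<^sup>2) > 0"
  shows "(LINT x|lborel. W t x * hermite n (z * of_real x) * hermite n (t * of_real x))
     = (2 * z / t) ^ n * of_nat (fact n) * (LINT x|lborel. W t x)"
proof (induction n)
  case 0 then show ?case by simp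
next
  case (Suc n)
  show ?case unfolding Brec[OF a] Suc by (simp add: algebra_simps)
qed



lemma main_bound:
  fixes r \<theta> :: real and k :: "nat \<Rightarrow> complex"
  assumes r: "r > 0" and th: "\<bar>\<theta>\<bar> < pi / 4"
    and norm1: "(LINT x|lborel. (eigfun (of_real r * exp (\<i> * of_real \<theta>)) k n x)\<^sup>2) = 1"
  shows "proj_norm (of_real r * exp (\<i> * of_real \<theta>)) k n \<ge> (1 / cos (2 * \<theta>)) ^ n"
proof -
  define z where "z = of_real r * exp (\<i> * of_real \<theta>)"
  define c where "c = cos (2 * \<theta>)"
  have c0: "c > 0" unfolding c_def using th by (intro cos_gt_zero_pi) auto
  have c1: "c \<le> 1" unfolding c_def by simp
  define a where "a = r\<^sup>2 * c"
  have a0: "a > 0" unfolding a_def using r c0 by simp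
  define s where "s = sqrt a"
  have s0: "s > 0" unfolding s_def using a0 by simp
  define t where "t = (of_real s :: complex)"
  have t2: "t\<^sup>2 = of_real a" unfolding t_def s_def using a0 by (simp flip: of_real_power)
  have Ret: "Re (t\<^sup>2) = a" using t2 by simp
  have z2: "z\<^sup>2 = of_real (r\<^sup>2) * cis (2 * \<theta>)"
  proof -
    have e: "exp (\<i> * of_real \<theta>) = cis \<theta>" by (rule cis_conv_exp[symmetric])
    have c2: "(cis \<theta>)\<^sup>2 = cis (2 * \<theta>)"
      using Complex.DeMoivre[of \<theta> 2] by simp
    show ?thesis unfolding z_def e power_mult_distrib c2 of_real_power ..
  qed
  have Rez: "Re (z\<^sup>2) = a" unfolding z2 a_def c_def by simp
  have cz: "cmod z = r" unfolding z_def using r by (simp add: norm_mult)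
  have az: "Re (z\<^sup>2) > 0" and at: "Re (t\<^sup>2) > 0" using Rez Ret a0 by auto
  define h where "h x = hermite n (z * of_real x)" for x
  define g where "g x = hermite n (t * of_real x)" for x
  define Q where "Q = (2 ^ n * fact n :: real)"
  have Q0: "Q > 0" unfolding Q_def by simp
  define L1 where "L1 = (LINT x|lborel. W z x)"
  define I0 where "I0 = (LINT x|lborel. cmod (W t x))"
  define A where "A = (LINT x|lborel. cmod (W t x * h x * h x))"
  define Y where "Y = (LINT x|lborel. cmod (W t x * h x * g x))"
  define G where "G = (LINT x|lborel. cmod (W t x * g x * g x))"
  define X where "X = (LINT x|lborel. W t x * h x * g x)"
  have eig2: "(eigfun z k n x)\<^sup>2 = (k n)\<^sup>2 * (W z x * h x * h x)" for x
  proof -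
    have "exp (- (z\<^sup>2 * (of_real x)\<^sup>2) / 2) ^ 2 = W z x"
      unfolding W_def power2_eq_square[of "exp _"] exp_add[symmetric] by simp
    then show ?thesis unfolding eigfun_def h_def power_mult_distrib by (simp add: power2_eq_square)
  qed
  have "(LINT x|lborel. (eigfun z k n x)\<^sup>2) = (k n)\<^sup>2 * (of_real Q * L1)"
    unfolding eig2 integral_mult_right_zero h_def Bn[OF az] L1_def Q_def using az cz r by auto
  with norm1 have N: "(k n)\<^sup>2 * (of_real Q * L1) = 1" unfolding z_def by simp
  then have N': "(cmod (k n))\<^sup>2 * Q * cmod L1 = 1"
  proof -
    have "cmod ((k n)\<^sup>2 * (of_real Q * L1)) = 1" using N by simp
    then show ?thesis using Q0 by (simp add: norm_mult norm_power mult.assoc)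
  qed
  have L1I0: "cmod L1 \<le> I0"
  proof -
    have "cmod L1 \<le> (LINT x|lborel. cmod (W z x))" unfolding L1_def by (rule integral_norm_bound)
    also have "\<dots> = I0" unfolding I0_def W_norm Rez Ret ..
    finally show ?thesis .
  qed
  have L1pos: "cmod L1 > 0" using N' norm_ge_zero[of L1] by (cases "cmod L1 = 0") auto
  have I0pos: "I0 > 0" using L1I0 L1pos by linarith
  have pn: "proj_norm z k n = (cmod (k n))\<^sup>2 * A"
  proof -
    have "(cmod (eigfun z k n x))\<^sup>2 = (cmod (k n))\<^sup>2 * cmod (W t x * h x * h x)" for x
    proof -
      have "(cmod (eigfun z k n x))\<^sup>2 = cmod ((eigfun z k n x)\<^sup>2)" by (simp add: norm_power)
      also have "\<dots> = (cmod (k n))\<^sup>2 * cmod (W z x * h x * h x)" unfolding eig2 by (simp add: norm_mult norm_power)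
      also have "cmod (W z x * h x * h x) = cmod (W t x * h x * h x)" by (simp add: norm_mult W_norm Rez Ret)
      finally show ?thesis .
    qed
    then show ?thesis unfolding proj_norm_def A_def by simp
  qed
  have Wreal: "W t x = of_real (cmod (W t x))" for x
    unfolding W_def t_def by (simp flip: of_real_power of_real_mult of_real_minus of_real_exp)
  have greal: "g x = of_real (Re (g x))" for x
    using hermite_real[of n "s * x"] unfolding g_def t_def by (simp add: complex_eq_iff)
  have Xval: "X = (2 * z / t) ^ n * of_nat (fact n) * of_real I0"
  proof -
    have "(LINT x|lborel. W t x) = (LINT x|lborel. complex_of_real (cmod (W t x)))"
      by (subst Wreal) simp
    then show ?thesis unfolding X_def h_def g_def Bn[OF at] I0_def by simp
  qed
  have Gval: "G = Q * I0"
  proof -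
    have "W t x * g x * g x = of_real (cmod (W t x * g x * g x))" for x
    proof -
      have "W t x * g x * g x = of_real (cmod (W t x) * (Re (g x))\<^sup>2)"
        by (subst Wreal, subst (1 2) greal) (simp add: power2_eq_square)
      moreover have "cmod (W t x * g x * g x) = cmod (W t x) * (Re (g x))\<^sup>2"
        by (subst (1 2) greal) (simp add: norm_mult power2_eq_square)
      ultimately show ?thesis by simp
    qed
    then have "of_real G = (LINT x|lborel. W t x * g x * g x)"
      unfolding G_def integral_complex_of_real[symmetric] by simp
    also have "\<dots> = (2 * t / t) ^ n * of_nat (fact n) * (LINT x|lborel. W t x)"
      unfolding g_def by (rule Bn[OF at])
    also have "(LINT x|lborel. W t x) = of_real I0"
      unfolding I0_def integral_complex_of_real[symmetric] by (subst Wreal) simp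
    finally have "of_real G = (of_real (Q * I0) :: complex)"
      using s0 unfolding Q_def t_def by simp
    then show ?thesis by (simp only: of_real_eq_iff)
  qed
  have G0: "G > 0" using Gval Q0 I0pos by simp
  have Xnorm: "(cmod X)\<^sup>2 = Q * Q * I0 * I0 * (1 / c) ^ n"
  proof -
    have "cmod (2 * z / t) = 2 * r / s" using s0 cz unfolding t_def by (simp add: norm_divide norm_mult)
    then have "cmod X = (2 * r / s) ^ n * fact n * I0"
      unfolding Xval using I0pos by (simp add: norm_mult norm_power)
    then have "(cmod X)\<^sup>2 = ((2 * r / s) ^ n)\<^sup>2 * fact n * fact n * I0 * I0"
      by (simp only: power_mult_distrib power2_eq_square[of "fact n :: real"] power2_eq_square[of I0] mult.assoc)
    also have "((2 * r / s) ^ n)\<^sup>2 = ((2 * r / s)\<^sup>2) ^ n"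
      by (simp only: power_mult[symmetric] mult.commute)
    also have "(2 * r / s)\<^sup>2 = 4 * (1 / c)"
      using s0 a0 r c0 unfolding s_def a_def by (simp add: power_divide field_simps)
    finally have X2: "(cmod X)\<^sup>2 = (4 * (1 / c)) ^ n * fact n * fact n * I0 * I0" .
    have p4: "(4 * (1 / c)) ^ n = 2 ^ n * 2 ^ n * (1 / c) ^ n"
    proof -
      have "(4 * (1 / c)) ^ n = (2 * 2 * (1 / c)) ^ n" by simp
      also have "\<dots> = 2 ^ n * 2 ^ n * (1 / c) ^ n" by (simp only: power_mult_distrib)
      finally show ?thesis .
    qed
    show ?thesis unfolding X2 p4 Q_def by (simp add: algebra_simps)
  qed
  have iA: "integrable lborel (\<lambda>x. cmod (W t x * h x * h x))"
    using integrable_norm[OF good(1)[OF at, where j=0 and p=n and u=z and q=n and v=z]] unfolding h_def by simp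
  have iY: "integrable lborel (\<lambda>x. cmod (W t x * h x * g x))"
    using integrable_norm[OF good(1)[OF at, where j=0 and p=n and u=z and q=n and v=t]] unfolding h_def g_def by simp
  have iG: "integrable lborel (\<lambda>x. cmod (W t x * g x * g x))"
    using integrable_norm[OF good(1)[OF at, where j=0 and p=n and u=t and q=n and v=t]] unfolding g_def by simp
  \<comment> \<open>Cauchy-Schwarz type estimate\<close>
  define \<tau> where "\<tau> = cmod X / G"
  have tau0: "\<tau> \<ge> 0" unfolding \<tau>_def using G0 by simp
  have pw: "2 * \<tau> * cmod (W t x * h x * g x) \<le> cmod (W t x * h x * h x) + \<tau>\<^sup>2 * cmod (W t x * g x * g x)" for x
  proof -
    have "0 \<le> cmod (W t x) * (cmod (h x) - \<tau> * cmod (g x))\<^sup>2" by simp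
    then show ?thesis by (simp add: norm_mult power2_eq_square algebra_simps)
  qed
  have "2 * \<tau> * Y \<le> A + \<tau>\<^sup>2 * G"
  proof -
    have "(LINT x|lborel. 2 * \<tau> * cmod (W t x * h x * g x)) \<le> (LINT x|lborel. cmod (W t x * h x * h x) + \<tau>\<^sup>2 * cmod (W t x * g x * g x))"
      by (rule integral_mono) (use iA iY iG pw in auto)
    then show ?thesis unfolding A_def Y_def G_def using iA iG by simp
  qed
  moreover have "cmod X \<le> Y" unfolding X_def Y_def by (rule integral_norm_bound)
  ultimately have "2 * \<tau> * cmod X \<le> A + \<tau>\<^sup>2 * G"
  proof -
    assume H1: "2 * \<tau> * Y \<le> A + \<tau>\<^sup>2 * G" and H2: "cmod X \<le> Y"
    have "2 * \<tau> * cmod X \<le> 2 * \<tau> * Y" using H2 tau0 by (simp add: mult_left_mono)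
    then show ?thesis using H1 by linarith
  qed
  then have "A \<ge> (cmod X)\<^sup>2 / G"
    unfolding \<tau>_def using G0 by (simp add: field_simps power2_eq_square)
  then have AQ: "A \<ge> Q * I0 * (1 / c) ^ n"
    unfolding Xnorm Gval using Q0 I0pos by (simp add: field_simps)
  have "proj_norm z k n \<ge> (cmod (k n))\<^sup>2 * (Q * I0 * (1 / c) ^ n)"
    unfolding pn by (rule mult_left_mono[OF AQ]) simp
  also have "(cmod (k n))\<^sup>2 * (Q * I0 * (1 / c) ^ n) = I0 / cmod L1 * (1 / c) ^ n"
  proof -
    have kk: "(cmod (k n))\<^sup>2 = 1 / (Q * cmod L1)" using N' Q0 L1pos by (simp add: field_simps)
    show ?thesis unfolding kk using Q0 L1pos by (simp add: field_simps)
  qed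
  also have "\<dots> \<ge> 1 * (1 / c) ^ n"
    using L1I0 L1pos c0 by (intro mult_right_mono) (simp_all add: field_simps)
  finally show ?thesis unfolding z_def c_def by simp
qed


theorem theorem7:
  fixes r \<theta> :: real and k :: "nat \<Rightarrow> complex"
  assumes "r > 0" and "\<bar>\<theta>\<bar> < pi / 4"
    and "\<And>n. (LINT x|lborel. (eigfun (of_real r * exp (\<i> * of_real \<theta>)) k n x)\<^sup>2) = 1"
  shows "liminf (\<lambda>n. ereal (ln (proj_norm (of_real r * exp (\<i> * of_real \<theta>)) k n) / real n))
           \<ge> ereal (ln (1 / cos (2 * \<theta>)))"
proof (rule Liminf_bounded)
  have c0: "cos (2 * \<theta>) > 0" using assms(2) by (intro cos_gt_zero_pi) auto
  show "\<forall>\<^sub>F n in sequentially. ereal (ln (1 / cos (2 * \<theta>)))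
      \<le> ereal (ln (proj_norm (of_real r * exp (\<i> * of_real \<theta>)) k n) / real n)"
    using eventually_ge_at_top[of "1::nat"]
  proof eventually_elim
    case (elim n)
    define p where "p = proj_norm (of_real r * exp (\<i> * of_real \<theta>)) k n"
    have pb: "p \<ge> (1 / cos (2 * \<theta>)) ^ n" unfolding p_def by (rule main_bound[OF assms(1,2) assms(3)])
    have pos: "(1 / cos (2 * \<theta>)) ^ n > 0" using c0 by simp
    have "ln ((1 / cos (2 * \<theta>)) ^ n) \<le> ln p" using pb pos by simp
    then have "real n * ln (1 / cos (2 * \<theta>)) \<le> ln p" using c0 by (simp add: ln_realpow)
    then have "ln (1 / cos (2 * \<theta>)) \<le> ln p / real n" using elim by (simp add: field_simps)
    then show ?case unfolding p_def by simp
  qed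
qed

end
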